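(* Let $\tau$ be a typical Euclidean triangle and let $S_\tau=\langle s_1,s_2,s_3\rangle\subset \mathrm{O}(2)$ (see context). Then $S_\tau$ admits the finite presentation $\langle x_1,x_2,x_3 \mid x_1^2,\ x_2^2,\ x_3^2,\ (x_1x_2x_3)^2\rangle$, with the generator $x_i$ corresponding to $s_i$ for $i=1,2,3$.
   Context: A Euclidean triangle $\tau=A_1A_2A_3$ has edges $e_i=A_jA_k$ and interior angles $\alpha_i$ at $A_i$, $\{i,j,k\}=\{1,2,3\}$; it is typical if $\alpha_1,\alpha_2,\alpha_3$ are linearly independent over $\mathbb{Q}$. Let $r_i$ be the reflection of the plane across the line containing $e_i$, and let $s_i\in\mathrm{O}(2)$ be its linear part, i.e. the linear reflection across the line through the origin parallel to $e_i$. $S_\tau$ is the subgroup of $\mathrm{O}(2)$ generated by $s_1,s_2,s_3$. *)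

theory Defs
  imports "HOL-Analysis.Analysis" "HOL-Algebra.Generated_Groups"
begin

definition O2 :: "((real^2) \<Rightarrow> (real^2)) monoid" where
  "O2 = \<lparr>carrier = {f. orthogonal_transformation f}, mult = (\<circ>), one = id\<rparr>"

definition lin_refl :: "real^2 \<Rightarrow> real^2 \<Rightarrow> real^2" where
  "lin_refl d v = (2 * (v \<bullet> d) / (d \<bullet> d)) *\<^sub>R d - v"

definition vec_angle :: "real^2 \<Rightarrow> real^2 \<Rightarrow> real" where
  "vec_angle u v = arccos ((u \<bullet> v) / (norm u * norm v))"

definition tri_angles :: "real^2 \<Rightarrow> real^2 \<Rightarrow> real^2 \<Rightarrow> real \<times> real \<times> real" where
  "tri_angles A1 A2 A3 =
     (vec_angle (A2 - A1) (A3 - A1), vec_angle (A1 - A2) (A3 - A2), vec_angle (A1 - A3) (A2 - A3))"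

definition typical_triangle :: "real^2 \<Rightarrow> real^2 \<Rightarrow> real^2 \<Rightarrow> bool" where
  "typical_triangle A1 A2 A3 \<longleftrightarrow> \<not> collinear {A1, A2, A3} \<and>
     (case tri_angles A1 A2 A3 of (a1, a2, a3) \<Rightarrow>
       (\<forall>q1 q2 q3. q1 \<in> \<rat> \<and> q2 \<in> \<rat> \<and> q3 \<in> \<rat> \<and> q1 * a1 + q2 * a2 + q3 * a3 = 0
          \<longrightarrow> q1 = 0 \<and> q2 = 0 \<and> q3 = 0))"

text \<open>The linear parts s1, s2, s3 of the reflections in the edge lines
  e1 = A2A3, e2 = A1A3, e3 = A1A2.\<close>
definition s1 :: "real^2 \<Rightarrow> real^2 \<Rightarrow> real^2 \<Rightarrow> real^2 \<Rightarrow> real^2" where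
  "s1 A1 A2 A3 = lin_refl (A3 - A2)"
definition s2 :: "real^2 \<Rightarrow> real^2 \<Rightarrow> real^2 \<Rightarrow> real^2 \<Rightarrow> real^2" where
  "s2 A1 A2 A3 = lin_refl (A3 - A1)"
definition s3 :: "real^2 \<Rightarrow> real^2 \<Rightarrow> real^2 \<Rightarrow> real^2 \<Rightarrow> real^2" where
  "s3 A1 A2 A3 = lin_refl (A2 - A1)"

definition S_tau :: "real^2 \<Rightarrow> real^2 \<Rightarrow> real^2 \<Rightarrow> ((real^2) \<Rightarrow> (real^2)) monoid" where
  "S_tau A1 A2 A3 = O2\<lparr>carrier := generate O2 {s1 A1 A2 A3, s2 A1 A2 A3, s3 A1 A2 A3}\<rparr>"

text \<open>Group G is presented by <x1,x2,x3 | x1^2, x2^2, x3^2, (x1 x2 x3)^2> via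
  xi -> gi: the gi generate G, satisfy the relations, and for every group H and
  elements h1 h2 h3 satisfying the relations there is a unique homomorphism G -> H
  with gi -> hi (universal property of the presented group).\<close>
definition rels3 :: "('a, 'b) monoid_scheme \<Rightarrow> 'a \<Rightarrow> 'a \<Rightarrow> 'a \<Rightarrow> bool" where
  "rels3 H a b c \<longleftrightarrow> a \<in> carrier H \<and> b \<in> carrier H \<and> c \<in> carrier H \<and>
     a \<otimes>\<^bsub>H\<^esub> a = \<one>\<^bsub>H\<^esub> \<and> b \<otimes>\<^bsub>H\<^esub> b = \<one>\<^bsub>H\<^esub> \<and> c \<otimes>\<^bsub>H\<^esub> c = \<one>\<^bsub>H\<^esub> \<and>
     (a \<otimes>\<^bsub>H\<^esub> b \<otimes>\<^bsub>H\<^esub> c) \<otimes>\<^bsub>H\<^esub> (a \<otimes>\<^bsub>H\<^esub> b \<otimes>\<^bsub>H\<^esub> c) = \<one>\<^bsub>H\<^esub>"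

end

theory Submission
  imports Defs
begin


definition toC :: "real^2 \<Rightarrow> complex" where "toC v = Complex (v$1) (v$2)"
definition ofC :: "complex \<Rightarrow> real^2" where "ofC z = vector [Re z, Im z]"

lemma ofC_toC[simp]: "ofC (toC v) = v"
  by (simp add: ofC_def toC_def vec_eq_iff forall_2)
lemma toC_ofC[simp]: "toC (ofC z) = z"
  by (simp add: ofC_def toC_def complex_eq_iff)

lemma inner2: "(v::real^2) \<bullet> d = v$1 * d$1 + v$2 * d$2"
  by (simp add: inner_vec_def sum_2)

lemma inner_toC: "v \<bullet> d = Re (cnj (toC v) * toC d)"
  by (simp add: inner2 toC_def)

lemma norm_toC: "norm v = cmod (toC v)"
proof -
  have "norm v = sqrt (v \<bullet> v)" by (rule norm_eq_sqrt_inner)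
  then show ?thesis by (simp add: inner2 toC_def cmod_def power2_eq_square)
qed

lemma toC_add: "toC (a + b) = toC a + toC b" by (simp add: toC_def complex_eq_iff)
lemma toC_diff: "toC (a - b) = toC a - toC b" by (simp add: toC_def complex_eq_iff)
lemma toC_scale: "toC (c *\<^sub>R a) = of_real c * toC a" by (simp add: toC_def complex_eq_iff)
lemma toC_eq: "toC a = toC b \<longleftrightarrow> a = b" by (metis ofC_toC)
lemma toC_zero: "toC a = 0 \<longleftrightarrow> a = 0" by (simp add: toC_def complex_eq_iff vec_eq_iff forall_2)

lemma refl_aux:
  fixes a b x y :: real
  assumes nz: "a*a + b*b \<noteq> 0"
  shows "Complex (2*(x*a+y*b)/(a*a+b*b)*a - x) (2*(x*a+y*b)/(a*a+b*b)*b - y)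
       = Complex a b / cnj (Complex a b) * cnj (Complex x y)"
proof -
  have cz: "cnj (Complex a b) \<noteq> 0" using nz by (auto simp: complex_eq_iff)
  have "Complex (2*(x*a+y*b)/(a*a+b*b)*a - x) (2*(x*a+y*b)/(a*a+b*b)*b - y) * cnj (Complex a b)
      = Complex a b * cnj (Complex x y)"
  proof -
    define t where "t = 2*(x*a+y*b)/(a*a+b*b)"
    have tN: "t * (a*a+b*b) = 2*(x*a+y*b)" using nz by (simp add: t_def)
    have "(t*a - x)*a + (t*b - y)*b = a*x + b*y" using tN by (simp add: algebra_simps)
    moreover have "(t*b - y)*a - (t*a - x)*b = a*(-y) + b*x" by (simp add: algebra_simps)
    ultimately show ?thesis unfolding t_def[symmetric] by (simp add: complex_eq_iff algebra_simps)
  qed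
  then have "Complex (2*(x*a+y*b)/(a*a+b*b)*a - x) (2*(x*a+y*b)/(a*a+b*b)*b - y) = Complex a b * cnj (Complex x y) / cnj (Complex a b)"
    using cz by (simp add: eq_divide_eq)
  then show ?thesis by simp
qed

lemma lin_refl_C: "d \<noteq> 0 \<Longrightarrow> toC (lin_refl d v) = (toC d / cnj (toC d)) * cnj (toC v)"
proof -
  assume False: "d \<noteq> 0"
  then have nz: "d$1 * d$1 + d$2 * d$2 \<noteq> 0"
    by (metis toC_zero toC_def complex_eq_cancel_iff2 sum_power2_eq_zero_iff zero_complex.code power2_eq_square)
  have "toC (lin_refl d v) = Complex (2*(v$1*d$1+v$2*d$2)/(d$1*d$1+d$2*d$2)*d$1 - v$1) (2*(v$1*d$1+v$2*d$2)/(d$1*d$1+d$2*d$2)*d$2 - v$2)"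
    unfolding lin_refl_def inner2 by (simp add: toC_def)
  also have "\<dots> = toC d / cnj (toC d) * cnj (toC v)"
    using refl_aux[OF nz] by (simp add: toC_def)
  finally show ?thesis .
qed


context group begin

lemma pow_m1: "y \<in> carrier G \<Longrightarrow> y [^] (-1::int) = inv y"
  using int_pow_neg[of y 1] by simp

lemma pow_succ: "y \<in> carrier G \<Longrightarrow> y [^] (i + 1::int) = y [^] i \<otimes> y"
  by (simp add: int_pow_mult)
lemma pow_pred: "y \<in> carrier G \<Longrightarrow> y [^] (i - 1::int) = y [^] i \<otimes> inv y"
  using int_pow_mult[of y i "-1"] by (simp add: pow_m1)

lemma conj_pow:
  assumes x: "x \<in> carrier G" and y: "y \<in> carrier G"
    and h1: "x \<otimes> y = inv y \<otimes> x" and h2: "x \<otimes> inv y = y \<otimes> x"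
  shows "x \<otimes> y [^] (m::int) = y [^] (-m) \<otimes> x"
proof (induction m rule: int_induct[where k=0])
  case base then show ?case using x by simp
next
  case (step1 i)
  have "x \<otimes> y [^] (i+1) = (x \<otimes> y [^] i) \<otimes> y" using x y by (simp add: pow_succ m_assoc)
  also have "\<dots> = y [^] (-i) \<otimes> (x \<otimes> y)" using step1 x y by (simp add: m_assoc)
  also have "\<dots> = (y [^] (-i) \<otimes> inv y) \<otimes> x" unfolding h1 using x y by (simp add: m_assoc)
  also have "y [^] (-i) \<otimes> inv y = y [^] (-(i+1))" using pow_pred[OF y, of "-i"] by simp
  finally show ?case .
next
  case (step2 i)
  have "x \<otimes> y [^] (i-1) = (x \<otimes> y [^] i) \<otimes> inv y" using x y by (simp add: pow_pred m_assoc)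
  also have "\<dots> = y [^] (-i) \<otimes> (x \<otimes> inv y)" using step2 x y by (simp add: m_assoc)
  also have "\<dots> = (y [^] (-i) \<otimes> y) \<otimes> x" unfolding h2 using x y by (simp add: m_assoc)
  also have "y [^] (-i) \<otimes> y = y [^] (-(i-1))" using pow_succ[OF y, of "-i"] by simp
  finally show ?case .
qed

lemma comm_pow1:
  assumes x: "x \<in> carrier G" and y: "y \<in> carrier G" and h: "x \<otimes> y = y \<otimes> x"
  shows "x [^] (m::int) \<otimes> y = y \<otimes> x [^] m"
proof (induction m rule: int_induct[where k=0])
  case base then show ?case using y by simp
next
  case (step1 i)
  have "x [^] (i+1) \<otimes> y = x [^] i \<otimes> (x \<otimes> y)" using x y by (simp add: pow_succ m_assoc)
  also have "\<dots> = (x [^] i \<otimes> y) \<otimes> x" unfolding h using x y by (simp add: m_assoc)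
  also have "\<dots> = y \<otimes> x [^] (i+1)" using step1 x y by (simp add: m_assoc pow_succ)
  finally show ?case .
next
  case (step2 i)
  have hi: "inv x \<otimes> y = y \<otimes> inv x"
  proof -
    have e1: "inv x \<otimes> (x \<otimes> y) \<otimes> inv x = y \<otimes> inv x" using x y by (simp add: m_assoc[symmetric])
    have e2: "inv x \<otimes> (y \<otimes> x) \<otimes> inv x = inv x \<otimes> y" using x y by (simp add: m_assoc)
    show ?thesis using e1 e2 h by metis
  qed
  have "x [^] (i-1) \<otimes> y = x [^] i \<otimes> (inv x \<otimes> y)" using x y by (simp add: pow_pred m_assoc)
  also have "\<dots> = (x [^] i \<otimes> y) \<otimes> inv x" unfolding hi using x y by (simp add: m_assoc)
  also have "\<dots> = y \<otimes> x [^] (i-1)" using step2 x y by (simp add: m_assoc pow_pred)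
  finally show ?case .
qed

lemma comm_pow:
  assumes x: "x \<in> carrier G" and y: "y \<in> carrier G" and h: "x \<otimes> y = y \<otimes> x"
  shows "x [^] (m::int) \<otimes> y [^] (n::int) = y [^] n \<otimes> x [^] m"
proof -
  have "y \<otimes> x [^] m = x [^] m \<otimes> y" using comm_pow1[OF x y h] by simp
  from comm_pow1[OF y _ this] x show ?thesis by simp
qed

end

definition nf :: "('a, 'b) monoid_scheme \<Rightarrow> 'a \<Rightarrow> 'a \<Rightarrow> 'a \<Rightarrow> bool \<times> int \<times> int \<Rightarrow> 'a" where
  "nf G a b c t = (case t of (e, m, n) \<Rightarrow>
     (if e then a else \<one>\<^bsub>G\<^esub>) \<otimes>\<^bsub>G\<^esub> ((a \<otimes>\<^bsub>G\<^esub> b) [^]\<^bsub>G\<^esub> m \<otimes>\<^bsub>G\<^esub> (b \<otimes>\<^bsub>G\<^esub> c) [^]\<^bsub>G\<^esub> n))"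

fun mulT :: "bool \<times> int \<times> int \<Rightarrow> bool \<times> int \<times> int \<Rightarrow> bool \<times> int \<times> int" where
  "mulT (e, m, n) (e', m', n') = (e \<noteq> e', (if e' then -m else m) + m', (if e' then -n else n) + n')"

locale rgroup = group +
  fixes a b c
  assumes rels: "rels3 G a b c"
begin

lemma abc: "a \<in> carrier G" "b \<in> carrier G" "c \<in> carrier G"
  using rels by (auto simp: rels3_def)

lemma sq: "a \<otimes> a = \<one>" "b \<otimes> b = \<one>" "c \<otimes> c = \<one>" "a \<otimes> b \<otimes> c \<otimes> (a \<otimes> b \<otimes> c) = \<one>"
  using rels by (auto simp: rels3_def)

lemma sq2: "z \<in> carrier G \<Longrightarrow> a \<otimes> (a \<otimes> z) = z" "z \<in> carrier G \<Longrightarrow> b \<otimes> (b \<otimes> z) = z"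
  "z \<in> carrier G \<Longrightarrow> c \<otimes> (c \<otimes> z) = z"
  using sq abc by (simp_all add: m_assoc[symmetric])

lemma invs: "inv a = a" "inv b = b" "inv c = c"
  using sq abc by (simp_all add: inv_equality)

lemma E1: "a \<otimes> (b \<otimes> c) = c \<otimes> (b \<otimes> a)"
proof -
  have "inv (a \<otimes> b \<otimes> c) = a \<otimes> b \<otimes> c" using sq abc by (intro inv_equality) auto
  moreover have "inv (a \<otimes> b \<otimes> c) = c \<otimes> (b \<otimes> a)" using abc invs by (simp add: inv_mult_group m_assoc)
  ultimately show ?thesis using abc by (simp add: m_assoc)
qed

lemma E2: "b \<otimes> (c \<otimes> a) = a \<otimes> (c \<otimes> b)"
proof -
  have "b \<otimes> (c \<otimes> a) = a \<otimes> (a \<otimes> (b \<otimes> c)) \<otimes> a" using abc by (simp add: sq2 m_assoc)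
  also have "\<dots> = a \<otimes> (c \<otimes> b)" unfolding E1 using abc by (simp add: sq2 m_assoc sq)
  finally show ?thesis .
qed

abbreviation "AA \<equiv> a \<otimes> b"
abbreviation "BB \<equiv> b \<otimes> c"

lemma AB_carr: "AA \<in> carrier G" "BB \<in> carrier G" using abc by auto

lemma AB_comm: "AA \<otimes> BB = BB \<otimes> AA"
proof -
  have "AA \<otimes> BB = a \<otimes> c" using abc sq by (simp add: m_assoc sq2)
  moreover have "BB \<otimes> AA = (b \<otimes> (c \<otimes> a)) \<otimes> b" using abc by (simp add: m_assoc)
  moreover have "\<dots> = a \<otimes> c" unfolding E2 using abc sq by (simp add: m_assoc sq2)
  ultimately show ?thesis by simp
qed

lemma conjA: "a \<otimes> AA [^] (m::int) = AA [^] (-m) \<otimes> a"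
proof (rule conj_pow)
  show "a \<otimes> AA = inv AA \<otimes> a" using abc invs sq by (simp add: inv_mult_group m_assoc sq2)
  show "a \<otimes> inv AA = AA \<otimes> a" using abc invs by (simp add: inv_mult_group m_assoc sq2)
qed (use abc in auto)

lemma conjB: "a \<otimes> BB [^] (m::int) = BB [^] (-m) \<otimes> a"
proof (rule conj_pow)
  show "a \<otimes> BB = inv BB \<otimes> a" using abc invs E1 by (simp add: inv_mult_group m_assoc)
  show "a \<otimes> inv BB = BB \<otimes> a" using abc invs E2 by (simp add: inv_mult_group m_assoc)
qed (use abc in auto)

lemma nf_carr: "nf G a b c t \<in> carrier G"
  using abc by (auto simp: nf_def split: prod.splits)

lemma nf_mult: "nf G a b c t \<otimes> nf G a b c t' = nf G a b c (mulT t t')"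
proof -
  obtain e m n where t: "t = (e, m, n)" by (cases t) auto
  obtain e' m' n' where t': "t' = (e', m', n')" by (cases t') auto
  define X where "X = (if e then a else \<one>)"
  have X: "X \<in> carrier G" using abc by (simp add: X_def)
  have cA: "\<And>i. AA [^] (i::int) \<in> carrier G" and cB: "\<And>i. BB [^] (i::int) \<in> carrier G"
    using AB_carr by auto
  have swap: "\<And>i j. BB [^] (i::int) \<otimes> AA [^] (j::int) = AA [^] j \<otimes> BB [^] i"
    using comm_pow[OF AB_carr(2) AB_carr(1)] AB_comm by simp
  show ?thesis
  proof (cases e')
    case False
    have "AA [^] m \<otimes> BB [^] n \<otimes> (AA [^] m' \<otimes> BB [^] n') = AA [^] m \<otimes> (BB [^] n \<otimes> AA [^] m') \<otimes> BB [^] n'"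
      using cA cB by (simp add: m_assoc)
    also have "\<dots> = AA [^] (m + m') \<otimes> BB [^] (n + n')"
      unfolding swap using cA cB AB_carr by (simp add: m_assoc int_pow_mult)
    finally have eq: "AA [^] m \<otimes> BB [^] n \<otimes> (AA [^] m' \<otimes> BB [^] n') = AA [^] (m + m') \<otimes> BB [^] (n + n')" .
    show ?thesis using False eq X cA cB
      by (simp add: t t' nf_def X_def[symmetric] m_assoc)
  next
    case True
    have p1: "BB [^] n \<otimes> a = a \<otimes> BB [^] (-n)" using conjB[of "-n"] by simp
    have p2: "AA [^] m \<otimes> a = a \<otimes> AA [^] (-m)" using conjA[of "-m"] by simp
    have "AA [^] m \<otimes> BB [^] n \<otimes> (a \<otimes> (AA [^] m' \<otimes> BB [^] n'))
        = AA [^] m \<otimes> (BB [^] n \<otimes> a) \<otimes> (AA [^] m' \<otimes> BB [^] n')"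
      using cA cB abc by (simp add: m_assoc)
    also have "\<dots> = (AA [^] m \<otimes> a) \<otimes> BB [^] (-n) \<otimes> (AA [^] m' \<otimes> BB [^] n')"
      unfolding p1 using cA cB abc by (simp add: m_assoc)
    also have "\<dots> = a \<otimes> (AA [^] (-m) \<otimes> (BB [^] (-n) \<otimes> AA [^] m') \<otimes> BB [^] n')"
      unfolding p2 using cA cB abc by (simp add: m_assoc)
    also have "\<dots> = a \<otimes> (AA [^] (-m + m') \<otimes> BB [^] (-n + n'))"
      unfolding swap int_pow_mult[OF AB_carr(1), of "-m" m'] int_pow_mult[OF AB_carr(2), of "-n" n']
      using cA cB abc AB_carr by (simp add: m_assoc)
    finally have eq: "AA [^] m \<otimes> BB [^] n \<otimes> (a \<otimes> (AA [^] m' \<otimes> BB [^] n')) = a \<otimes> (AA [^] (-m + m') \<otimes> BB [^] (-n + n'))" .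
    have "X \<otimes> (AA [^] m \<otimes> BB [^] n) \<otimes> (a \<otimes> (AA [^] m' \<otimes> BB [^] n')) = X \<otimes> a \<otimes> (AA [^] (-m + m') \<otimes> BB [^] (-n + n'))"
      using eq X cA cB abc by (simp add: m_assoc)
    moreover have "X \<otimes> a = (if e then \<one> else a)" using abc sq by (simp add: X_def)
    ultimately show ?thesis using True cA cB abc
      by (simp add: t t' nf_def X_def[symmetric])
  qed
qed

lemma nf_gens: "nf G a b c (True, 0, 0) = a" "nf G a b c (True, 1, 0) = b" "nf G a b c (True, 1, 1) = c"
  "nf G a b c (False, 0, 0) = \<one>"
  using abc by (simp_all add: nf_def sq2 m_assoc)

end

lemma nf_hom:
  assumes "rgroup G a b c" "group H" "f \<in> hom G H"
  shows "f (nf G a b c t) = nf H (f a) (f b) (f c) t"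
proof -
  interpret rgroup G a b c by fact
  interpret group_hom G H f using assms by (simp add: group_hom_def group_hom_axioms_def)
  show ?thesis using abc by (auto simp: nf_def hom_int_pow split: prod.splits)
qed



definition Rm :: "complex \<Rightarrow> real^2 \<Rightarrow> real^2" where "Rm c = (\<lambda>v. ofC (c * toC v))"
definition Fm :: "complex \<Rightarrow> real^2 \<Rightarrow> real^2" where "Fm c = (\<lambda>v. ofC (c * cnj (toC v)))"

lemma RR: "Rm a \<circ> Rm b = Rm (a*b)" by (simp add: Rm_def fun_eq_iff mult.assoc)
lemma FF: "Fm a \<circ> Fm b = Rm (a * cnj b)" by (simp add: Rm_def Fm_def fun_eq_iff mult.assoc)
lemma RF: "Rm a \<circ> Fm b = Fm (a*b)" by (simp add: Rm_def Fm_def fun_eq_iff mult.assoc)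
lemma FR: "Fm a \<circ> Rm b = Fm (a * cnj b)" by (simp add: Rm_def Fm_def fun_eq_iff mult.assoc)
lemma R1: "Rm 1 = id" by (simp add: Rm_def fun_eq_iff)

lemma Rm_inj: "Rm a = Rm b \<Longrightarrow> a = b"
  by (drule fun_cong[of _ _ "ofC 1"]) (simp add: Rm_def flip: toC_eq)
lemma Fm_inj: "Fm a = Fm b \<Longrightarrow> a = b"
  by (drule fun_cong[of _ _ "ofC 1"]) (simp add: Fm_def flip: toC_eq)
lemma FR_neq: "Fm a = Rm b \<Longrightarrow> a = 0"
proof -
  assume h: "Fm a = Rm b"
  from fun_cong[OF h, of "ofC 1"] have "a = b" by (simp add: Fm_def Rm_def flip: toC_eq)
  moreover from fun_cong[OF h, of "ofC \<i>"] have "- a * \<i> = b * \<i>" by (simp add: Fm_def Rm_def flip: toC_eq)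
  ultimately show "a = 0" by simp
qed

lemma ofC_add: "ofC (z + w) = ofC z + ofC w" by (simp add: ofC_def vec_eq_iff forall_2)
lemma ofC_scale: "ofC (of_real r * z) = r *\<^sub>R ofC z" by (simp add: ofC_def vec_eq_iff forall_2)
lemma norm_ofC: "norm (ofC z) = cmod z" by (simp add: norm_toC)

lemma orth_Rm: "cmod c = 1 \<Longrightarrow> orthogonal_transformation (Rm c)"
  unfolding orthogonal_transformation
proof (intro conjI allI)
  show "linear (Rm c)"
    by (rule linearI) (simp_all add: Rm_def toC_add toC_scale distrib_left ofC_add, metis mult.left_commute ofC_scale)
qed (simp add: Rm_def norm_ofC norm_mult norm_toC)

lemma orth_Fm: "cmod c = 1 \<Longrightarrow> orthogonal_transformation (Fm c)"
  unfolding orthogonal_transformation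
proof (intro conjI allI)
  show "linear (Fm c)"
    by (rule linearI) (simp_all add: Fm_def toC_add toC_scale distrib_left ofC_add, metis mult.left_commute ofC_scale)
qed (simp add: Fm_def norm_ofC norm_mult norm_toC)

lemma refl_Fm: "d \<noteq> 0 \<Longrightarrow> lin_refl d = Fm (toC d / cnj (toC d))"
  unfolding Fm_def fun_eq_iff by (metis lin_refl_C ofC_toC)

lemma unit_c: "D \<noteq> 0 \<Longrightarrow> cmod (D / cnj D) = 1"
  by (simp add: norm_divide)

lemma group_O2: "group O2"
proof (rule groupI)
  fix x assume "x \<in> carrier O2"
  then have x: "orthogonal_transformation x" by (simp add: O2_def)
  show "\<exists>y\<in>carrier O2. y \<otimes>\<^bsub>O2\<^esub> x = \<one>\<^bsub>O2\<^esub>"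
  proof (intro bexI)
    show "Hilbert_Choice.inv x \<in> carrier O2" using orthogonal_transformation_inv[OF x] by (simp add: O2_def)
    show "Hilbert_Choice.inv x \<otimes>\<^bsub>O2\<^esub> x = \<one>\<^bsub>O2\<^esub>"
      using orthogonal_transformation_bij[OF x] by (simp add: O2_def bij_is_inj)
  qed
qed (auto simp: O2_def orthogonal_transformation_compose id_def comp_assoc)

lemma unit_cis: "cmod w = 1 \<Longrightarrow> w = cis (arccos (Re w)) \<or> w = cis (- arccos (Re w))"
proof -
  assume w: "cmod w = 1"
  have r: "\<bar>Re w\<bar> \<le> 1" using abs_Re_le_cmod[of w] w by simp
  have i2: "(Im w)^2 = 1 - (Re w)^2" using cmod_power2[of w] w by simp
  have s: "sin (arccos (Re w)) = \<bar>Im w\<bar>"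
    using sin_arccos_abs[OF r] i2 by (simp add: real_sqrt_abs[symmetric])
  have c: "cos (arccos (Re w)) = Re w" using r by (simp add: abs_le_iff)
  show ?thesis
  proof (cases "Im w \<ge> 0")
    case True then show ?thesis using s c by (simp add: complex_eq_iff)
  next
    case False then show ?thesis using s c by (simp add: complex_eq_iff)
  qed
qed

lemma angle_cis:
  assumes "U \<noteq> 0" "V \<noteq> 0"
  shows "\<exists>\<epsilon>. (\<epsilon> = 1 \<or> \<epsilon> = -1) \<and>
     cnj (toC U) * toC V / of_real (norm U * norm V) = cis (\<epsilon> * vec_angle U V)"
proof -
  define w where "w = cnj (toC U) * toC V / of_real (norm U * norm V)"
  have nU: "norm U \<noteq> 0" "norm V \<noteq> 0" using assms by auto
  have "cmod w = 1" using nU unfolding w_def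
    by (simp add: norm_divide norm_mult norm_toC)
  moreover have "Re w = (U \<bullet> V) / (norm U * norm V)"
    unfolding w_def Re_divide_of_real inner_toC ..
  ultimately have "w = cis (1 * vec_angle U V) \<or> w = cis ((-1) * vec_angle U V)"
    using unit_cis[of w] by (simp add: vec_angle_def)
  then show ?thesis unfolding w_def[symmetric] by blast
qed



lemma cid1:
  fixes a b :: complex assumes a: "a \<noteq> 0" and b: "b \<noteq> 0" and ab: "a \<noteq> b"
  shows "(cnj a * b / of_real (cmod a * cmod b)) * (cnj (-b) * (a - b) / of_real (cmod b * cmod (a - b)))
       = - (cnj (-a) * (b - a) / of_real (cmod a * cmod (b - a)))"
proof -
  have nb: "of_real (cmod b) * of_real (cmod b) = b * cnj b"
    using complex_norm_square[of b] by (simp add: power2_eq_square)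
  have e: "cmod (b - a) = cmod (a - b)" by (rule norm_minus_commute)
  have nz: "cmod a \<noteq> 0" "cmod b \<noteq> 0" "cmod (a - b) \<noteq> 0" using a b ab by auto
  define A where "A = complex_of_real (cmod a)"
  define B where "B = complex_of_real (cmod b)"
  define C where "C = complex_of_real (cmod (a - b))"
  have nz': "A \<noteq> 0" "B \<noteq> 0" "C \<noteq> 0" using nz by (auto simp: A_def B_def C_def)
  have nz4: "b * cnj b \<noteq> 0" using b by simp
  have num: "cnj a * b * (cnj (-b) * (a - b)) = - (cnj a * (a - b)) * (b * cnj b)"
    by (simp add: algebra_simps)
  have bb: "B * B = b * cnj b" unfolding B_def by (rule nb)
  have den: "A * B * (B * C) = A * C * (b * cnj b)"
    unfolding bb[symmetric] by (simp only: mult_ac)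
  have "(cnj a * b / (A * B)) * (cnj (-b) * (a - b) / (B * C)) = - (cnj a * (a - b)) * (b * cnj b) / (A * C * (b * cnj b))"
    unfolding times_divide_times_eq num den ..
  also have "\<dots> = - (cnj a * (a - b)) / (A * C)"
    using nz4 by (rule nonzero_mult_divide_mult_cancel_right)
  also have "\<dots> = - (cnj (-a) * (b - a) / (A * C))" 
  proof -
    have h: "cnj (-a) * (b - a) = cnj a * (a - b)" by (simp add: algebra_simps)
    show ?thesis unfolding h minus_divide_left by (rule refl)
  qed
  finally show ?thesis unfolding e A_def B_def C_def of_real_mult .
qed

lemma sqlem: "(w / of_real (cmod z * cmod y))^2 = w^2 / (z * cnj z * (y * cnj y))"
  by (simp add: power_divide power_mult_distrib complex_norm_square[symmetric])

lemma cid3: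
  fixes a b :: complex assumes a: "a \<noteq> 0" and b: "b \<noteq> 0"
  shows "(cnj a * b / of_real (cmod a * cmod b))^2 = b / cnj b * cnj (a / cnj a)"
  unfolding sqlem using a b by (simp add: field_simps power2_eq_square)

lemma cid2a:
  fixes b d :: complex assumes b: "b \<noteq> 0" and d: "d \<noteq> 0"
  shows "(cnj (-b) * d)^2 / (b * cnj b * (d * cnj d)) = (- d) / (- cnj d) * (cnj b / b)"
  using b d by (simp add: field_simps power2_eq_square)

lemma cid2:
  fixes a b :: complex assumes a: "a \<noteq> 0" and b: "b \<noteq> 0" and ab: "a \<noteq> b"
  shows "(cnj (-b) * (a - b) / of_real (cmod b * cmod (a - b)))^2 = (b - a) / cnj (b - a) * cnj (b / cnj b)"
proof -
  have d: "a - b \<noteq> 0" using ab by simp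
  have e: "b - a = - (a - b)" "cnj (b - a) = - cnj (a - b)" by simp_all
  show ?thesis unfolding sqlem e using cid2a[OF b d] by simp
qed

lemma distinct3:
  assumes nc: "\<not> collinear {A1, A2, A3}"
  shows "A1 \<noteq> A2" "A1 \<noteq> A3" "A2 \<noteq> A3"
proof -
  show "A1 \<noteq> A2"
  proof
    assume "A1 = A2" then have "{A1, A2, A3} = {A2, A3}" by auto
    then show False using nc by simp
  qed
  show "A1 \<noteq> A3"
  proof
    assume "A1 = A3" then have "{A1, A2, A3} = {A2, A3}" by auto
    then show False using nc by simp
  qed
  show "A2 \<noteq> A3"
  proof
    assume "A2 = A3" then have "{A1, A2, A3} = {A1, A3}" by auto
    then show False using nc by simp
  qed
qed

lemma key:
  assumes ty: "typical_triangle A1 A2 A3"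
    and eq: "(toC (A3 - A2) / cnj (toC (A3 - A2)) * cnj (toC (A3 - A1) / cnj (toC (A3 - A1)))) powi p *
             (toC (A3 - A1) / cnj (toC (A3 - A1)) * cnj (toC (A2 - A1) / cnj (toC (A2 - A1)))) powi q = 1"
  shows "p = 0 \<and> q = 0"
proof -
  have nc: "\<not> collinear {A1, A2, A3}" using ty unfolding typical_triangle_def by (rule conjunct1)
  note n = distinct3[OF nc]
  have d0: "A2 - A1 \<noteq> 0" "A3 - A1 \<noteq> 0" "A1 - A2 \<noteq> 0" "A3 - A2 \<noteq> 0" "A1 - A3 \<noteq> 0" "A2 - A3 \<noteq> 0"
    using n by (auto simp: right_minus_eq)
  define a where "a = toC A2 - toC A1"
  define b where "b = toC A3 - toC A1"
  have t: "toC (A2 - A1) = a" "toC (A3 - A1) = b" "toC (A1 - A2) = - a" "toC (A3 - A2) = b - a"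
     "toC (A1 - A3) = - b" "toC (A2 - A3) = a - b"
    by (simp_all add: toC_diff a_def b_def)
  have a0: "a \<noteq> 0" using d0(1) t(1) toC_zero by metis
  have b0: "b \<noteq> 0" using d0(2) t(2) toC_zero by metis
  have ab: "a \<noteq> b"
  proof
    assume "a = b" then have "toC (A3 - A2) = 0" using t(4) by simp
    then show False using d0(4) toC_zero by metis
  qed
  define \<alpha>1 where "\<alpha>1 = vec_angle (A2 - A1) (A3 - A1)"
  define \<alpha>2 where "\<alpha>2 = vec_angle (A1 - A2) (A3 - A2)"
  define \<alpha>3 where "\<alpha>3 = vec_angle (A1 - A3) (A2 - A3)"
  have T0: "\<forall>q1 q2 q3. q1 \<in> \<rat> \<and> q2 \<in> \<rat> \<and> q3 \<in> \<rat> \<and> q1 * \<alpha>1 + q2 * \<alpha>2 + q3 * \<alpha>3 = 0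
      \<longrightarrow> q1 = 0 \<and> q2 = 0 \<and> q3 = 0"
    using ty unfolding typical_triangle_def tri_angles_def prod.case \<alpha>1_def[symmetric] \<alpha>2_def[symmetric] \<alpha>3_def[symmetric]
    by (rule conjunct2)
  have T: "\<And>q1 q2 q3. q1 \<in> \<rat> \<Longrightarrow> q2 \<in> \<rat> \<Longrightarrow> q3 \<in> \<rat> \<Longrightarrow> q1 * \<alpha>1 + q2 * \<alpha>2 + q3 * \<alpha>3 = 0
      \<Longrightarrow> q1 = 0 \<and> q2 = 0 \<and> q3 = 0"
    using T0 by blast
  obtain e1 where e1: "e1 = 1 \<or> e1 = -1" and W1': "cnj (toC (A2 - A1)) * toC (A3 - A1) / of_real (norm (A2 - A1) * norm (A3 - A1)) = cis (e1 * \<alpha>1)"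
    using angle_cis[OF d0(1) d0(2)] unfolding \<alpha>1_def by blast
  have W1: "cnj a * b / of_real (cmod a * cmod b) = cis (e1 * \<alpha>1)"
    using W1' unfolding norm_toC t .
  obtain e2 where e2: "e2 = 1 \<or> e2 = -1" and W2': "cnj (toC (A1 - A2)) * toC (A3 - A2) / of_real (norm (A1 - A2) * norm (A3 - A2)) = cis (e2 * \<alpha>2)"
    using angle_cis[OF d0(3) d0(4)] unfolding \<alpha>2_def by blast
  have W2: "cnj (-a) * (b - a) / of_real (cmod a * cmod (b - a)) = cis (e2 * \<alpha>2)"
    using W2' unfolding norm_toC t norm_minus_cancel .
  obtain e3 where e3: "e3 = 1 \<or> e3 = -1" and W3': "cnj (toC (A1 - A3)) * toC (A2 - A3) / of_real (norm (A1 - A3) * norm (A2 - A3)) = cis (e3 * \<alpha>3)"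
    using angle_cis[OF d0(5) d0(6)] unfolding \<alpha>3_def by blast
  have W3: "cnj (-b) * (a - b) / of_real (cmod b * cmod (a - b)) = cis (e3 * \<alpha>3)"
    using W3' unfolding norm_toC t norm_minus_cancel .
  define x1 where "x1 = e1 * \<alpha>1"
  define x2 where "x2 = e2 * \<alpha>2"
  define x3 where "x3 = e3 * \<alpha>3"
  have rel: "cis x1 * cis x3 = - cis x2"
    unfolding x1_def x2_def x3_def W1[symmetric] W2[symmetric] W3[symmetric] by (rule cid1[OF a0 b0 ab])
  have u: "(b - a) / cnj (b - a) * cnj (b / cnj b) = cis (2 * x3)"
  proof -
    have h1: "cis x3 ^ 2 = (b - a) / cnj (b - a) * cnj (b / cnj b)"
      using cid2[OF a0 b0 ab] unfolding W3 x3_def[symmetric] .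
    have h2: "cis x3 ^ 2 = cis (2 * x3)" using Complex.DeMoivre[of x3 2] by (simp only: of_nat_numeral)
    show ?thesis using h1 h2 by metis
  qed
  have v: "b / cnj b * cnj (a / cnj a) = cis (2 * x1)"
  proof -
    have h1: "cis x1 ^ 2 = b / cnj b * cnj (a / cnj a)"
      using cid3[OF a0 b0] unfolding W1 x1_def[symmetric] .
    have h2: "cis x1 ^ 2 = cis (2 * x1)" using Complex.DeMoivre[of x1 2] by (simp only: of_nat_numeral)
    show ?thesis using h1 h2 by metis
  qed
  have Rec: "\<And>z. Re (cis z) = cos z" by simp
  have "cis (2 * x3) powi p * cis (2 * x1) powi q = 1" using eq unfolding t u v .
  then have "cis (of_int p * (2 * x3)) * cis (of_int q * (2 * x1)) = 1" by (simp only: cis_power_int)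
  then have "cis (of_int p * (2 * x3) + of_int q * (2 * x1)) = 1" by (simp only: cis_mult)
  then have "Re (cis (of_int p * (2 * x3) + of_int q * (2 * x1))) = Re 1" by (rule arg_cong)
  then have "cos (of_int p * (2 * x3) + of_int q * (2 * x1)) = 1"
    by (simp only: Rec one_complex.simps)
  then obtain j :: int where j: "of_int p * (2 * x3) + of_int q * (2 * x1) = of_int j * 2 * pi"
    using cos_one_2pi_int by blast
  have "cis (x1 + x3 - x2) = cis (x1 + x3) / cis x2" by (rule cis_divide[symmetric])
  also have "\<dots> = (cis x1 * cis x3) / cis x2" by (simp only: cis_mult)
  also have "\<dots> = - cis x2 / cis x2" by (simp only: rel)
  also have "\<dots> = -1" by (simp only: divide_minus_left divide_self[OF cis_neq_zero])
  finally have "cis (x1 + x3 - x2) = -1" .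
  then have "Re (cis (x1 + x3 - x2)) = Re (-1)" by (rule arg_cong)
  then have "cos (x1 + x3 - x2) = -1"
    by (simp only: Rec one_complex.simps uminus_complex.simps)
  then obtain k :: int where k: "x1 + x3 - x2 = (2 * of_int k + 1) * pi"
    using cos_eq_minus1 by blast
  define q1 where "q1 = e1 * ((2 * of_int k + 1) * of_int q - of_int j)"
  define q2 where "q2 = e2 * of_int j"
  define q3 where "q3 = e3 * ((2 * of_int k + 1) * of_int p - of_int j)"
  have eQ: "e1 \<in> \<rat>" "e2 \<in> \<rat>" "e3 \<in> \<rat>" using e1 e2 e3 by auto
  have Q: "q1 \<in> \<rat>" "q2 \<in> \<rat>" "q3 \<in> \<rat>" unfolding q1_def q2_def q3_def using eQ
    by (auto intro!: Rats_mult Rats_diff Rats_add)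
  have pq: "of_int p * x3 + of_int q * x1 = of_int j * pi" using j by (simp add: algebra_simps)
  have "q1 * \<alpha>1 + q2 * \<alpha>2 + q3 * \<alpha>3
      = (2 * of_int k + 1) * (of_int p * x3 + of_int q * x1) - of_int j * (x1 + x3 - x2)"
    unfolding q1_def q2_def q3_def x1_def x2_def x3_def by (simp add: algebra_simps)
  also have "\<dots> = 0" unfolding pq k by (simp add: algebra_simps)
  finally have "q1 = 0 \<and> q2 = 0 \<and> q3 = 0" using T Q by blast
  then have j0: "j = 0" and hq: "(2 * of_int k + 1) * of_int q - of_int j = (0::real)"
    and hp: "(2 * of_int k + 1) * of_int p - of_int j = (0::real)"
    using e1 e2 e3 unfolding q1_def q2_def q3_def by auto
  have k0: "(2 * of_int k + 1 :: real) \<noteq> 0"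
  proof
    assume "(2 * of_int k + 1 :: real) = 0"
    then have "of_int (2 * k + 1) = (0::real)" by simp
    then have "2 * k + 1 = 0" by (simp only: of_int_eq_0_iff)
    then show False by presburger
  qed
  show ?thesis using hq hp j0 k0 by auto
qed



lemma S_simps: "mult (O2\<lparr>carrier := X\<rparr>) = (\<circ>)" "one (O2\<lparr>carrier := X\<rparr>) = id"
  "carrier (O2\<lparr>carrier := X\<rparr>) = X" "mult O2 = (\<circ>)" "one O2 = id"
  by (simp_all add: O2_def)

lemma powR:
  assumes G: "group (O2\<lparr>carrier := X\<rparr>)" and x: "Rm u \<in> X" and u: "u \<noteq> 0"
  shows "Rm u [^]\<^bsub>O2\<lparr>carrier := X\<rparr>\<^esub> (m::int) = Rm (u powi m)"
proof -
  interpret g: group "O2\<lparr>carrier := X\<rparr>" by (rule G)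
  have xc: "Rm u \<in> carrier (O2\<lparr>carrier := X\<rparr>)" using x by simp
  have inv: "inv\<^bsub>O2\<lparr>carrier := X\<rparr>\<^esub> (Rm u) = Rm (1/u)"
  proof -
    let ?i = "inv\<^bsub>O2\<lparr>carrier := X\<rparr>\<^esub> (Rm u)"
    have h: "?i \<circ> Rm u = id" using g.l_inv[OF xc] by (simp add: S_simps)
    have r: "Rm u \<circ> Rm (1/u) = id" using u by (simp add: RR R1)
    have "?i = ?i \<circ> (Rm u \<circ> Rm (1/u))" unfolding r by simp
    also have "\<dots> = (?i \<circ> Rm u) \<circ> Rm (1/u)" by (simp add: comp_assoc)
    finally show ?thesis unfolding h by simp
  qed
  show ?thesis
  proof (induction m rule: int_induct[where k=0])
    case base then show ?case by (simp add: S_simps R1)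
  next
    case (step1 i)
    then show ?case using g.pow_succ[OF xc, of i] u by (simp add: S_simps RR power_int_add_1)
  next
    case (step2 i)
    then show ?case using g.pow_pred[OF xc, of i] u inv by (simp add: S_simps RR power_int_diff field_simps)
  qed
qed

lemma unit_mult_cnj: "cmod c = 1 \<Longrightarrow> c * cnj c = 1"
  using complex_norm_square[of c] by simp

lemma FF_id: "cmod c = 1 \<Longrightarrow> Fm c \<circ> Fm c = id"
  by (simp add: FF unit_mult_cnj R1)

theorem proposition3p4:
  fixes A1 A2 A3 :: "real^2" and H :: "('h, 'c) monoid_scheme"
  assumes "typical_triangle A1 A2 A3"
  shows "group (S_tau A1 A2 A3)
    \<and> rels3 (S_tau A1 A2 A3) (s1 A1 A2 A3) (s2 A1 A2 A3) (s3 A1 A2 A3)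
    \<and> (\<forall>h1 h2 h3. group H \<and> rels3 H h1 h2 h3 \<longrightarrow>
         (\<exists>\<phi> \<in> hom (S_tau A1 A2 A3) H.
            \<phi> (s1 A1 A2 A3) = h1 \<and> \<phi> (s2 A1 A2 A3) = h2 \<and> \<phi> (s3 A1 A2 A3) = h3 \<and>
            (\<forall>\<psi> \<in> hom (S_tau A1 A2 A3) H.
               \<psi> (s1 A1 A2 A3) = h1 \<and> \<psi> (s2 A1 A2 A3) = h2 \<and> \<psi> (s3 A1 A2 A3) = h3
               \<longrightarrow> (\<forall>x \<in> carrier (S_tau A1 A2 A3). \<psi> x = \<phi> x))))"
proof -
  note ty = assms
  have nc: "\<not> collinear {A1, A2, A3}" using ty by (simp add: typical_triangle_def)
  have n12: "A1 \<noteq> A2" using nc by (metis collinear_2 insert_absorb2)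
  have n13: "A1 \<noteq> A3" using nc by (metis collinear_2 insert_absorb2 insert_commute)
  have n23: "A2 \<noteq> A3" using nc by (metis collinear_2 insert_absorb2 insert_commute)
  define c1 where "c1 = toC (A3 - A2) / cnj (toC (A3 - A2))"
  define c2 where "c2 = toC (A3 - A1) / cnj (toC (A3 - A1))"
  define c3 where "c3 = toC (A2 - A1) / cnj (toC (A2 - A1))"
  have d0: "A3 - A2 \<noteq> 0" "A3 - A1 \<noteq> 0" "A2 - A1 \<noteq> 0" using n12 n13 n23 by auto
  have D0: "toC (A3 - A2) \<noteq> 0" "toC (A3 - A1) \<noteq> 0" "toC (A2 - A1) \<noteq> 0"
    using d0 by (simp_all add: toC_zero)
  have cu: "cmod c1 = 1" "cmod c2 = 1" "cmod c3 = 1"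
    unfolding c1_def c2_def c3_def using D0 by (simp_all add: unit_c)
  have c0: "c1 \<noteq> 0" using cu by auto
  have sF: "s1 A1 A2 A3 = Fm c1" "s2 A1 A2 A3 = Fm c2" "s3 A1 A2 A3 = Fm c3"
    unfolding s1_def s2_def s3_def c1_def c2_def c3_def using d0 by (simp_all add: refl_Fm)
  define gens where "gens = {Fm c1, Fm c2, Fm c3}"
  define X where "X = generate O2 gens"
  have S: "S_tau A1 A2 A3 = O2\<lparr>carrier := X\<rparr>" unfolding S_tau_def X_def gens_def sF ..
  interpret O: group O2 by (rule group_O2)
  have gc: "gens \<subseteq> carrier O2" unfolding gens_def using cu by (simp add: O2_def orth_Fm)
  have sub: "subgroup X O2" unfolding X_def by (rule O.generate_is_subgroup[OF gc])
  have G: "group (O2\<lparr>carrier := X\<rparr>)" by (rule O.subgroup_imp_group[OF sub])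
  interpret G: group "O2\<lparr>carrier := X\<rparr>" by (rule G)
  have inX: "Fm c1 \<in> X" "Fm c2 \<in> X" "Fm c3 \<in> X" unfolding X_def gens_def by (auto intro: generate.incl)
  define y where "y = c1 * cnj c2 * c3"
  have yu: "cmod y = 1" using cu by (simp add: y_def norm_mult)
  have R: "rels3 (O2\<lparr>carrier := X\<rparr>) (Fm c1) (Fm c2) (Fm c3)"
    unfolding rels3_def S_simps using inX cu yu
    by (simp add: FF RF y_def[symmetric] unit_mult_cnj R1 flip: comp_assoc)
  interpret rG: rgroup "O2\<lparr>carrier := X\<rparr>" "Fm c1" "Fm c2" "Fm c3"
    by unfold_locales (rule R)
  let ?S = "O2\<lparr>carrier := X\<rparr>"
  let ?nf = "nf ?S (Fm c1) (Fm c2) (Fm c3)"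
  define u where "u = c1 * cnj c2"
  define v where "v = c2 * cnj c3"
  have u0: "u \<noteq> 0" "v \<noteq> 0" using cu by (auto simp: u_def v_def)
  have AA: "Fm c1 \<otimes>\<^bsub>?S\<^esub> Fm c2 = Rm u" "Fm c2 \<otimes>\<^bsub>?S\<^esub> Fm c3 = Rm v"
    by (simp_all add: S_simps FF u_def v_def)
  have AAX: "Rm u \<in> X" "Rm v \<in> X" using rG.AB_carr unfolding AA by simp_all
  have nf_eval: "?nf (e, m, n) = (if e then Fm (c1 * cnj (u powi m * v powi n)) else Rm (u powi m * v powi n))"
    for e m n
    unfolding nf_def AA using powR[OF G AAX(1) u0(1)] powR[OF G AAX(2) u0(2)]
    by (simp add: S_simps RR FR R1)
  have nf_inj: "?nf t = ?nf t' \<Longrightarrow> t = t'" for t t'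
  proof -
    assume h: "?nf t = ?nf t'"
    obtain e m n where t: "t = (e, m, n)" by (cases t) auto
    obtain e' m' n' where t': "t' = (e', m', n')" by (cases t') auto
    define P where "P = u powi m * v powi n"
    define P' where "P' = u powi m' * v powi n'"
    have P0: "P \<noteq> 0" "P' \<noteq> 0" using u0 by (auto simp: P_def P'_def)
    have h2: "(if e then Fm (c1 * cnj P) else Rm P) = (if e' then Fm (c1 * cnj P') else Rm P')"
      using h unfolding t t' nf_eval P_def P'_def .
    have ee: "e = e'"
    proof (rule ccontr)
      assume ne: "e \<noteq> e'"
      show False
      proof (cases e)
        case True
        then have "Fm (c1 * cnj P) = Rm P'" using ne h2 by simp
        then have "c1 * cnj P = 0" by (rule FR_neq)
        then show False using c0 P0 by simp
      next
        case False
        then have "Fm (c1 * cnj P') = Rm P" using ne h2 by simp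
        then have "c1 * cnj P' = 0" by (rule FR_neq)
        then show False using c0 P0 by simp
      qed
    qed
    have PP: "P = P'"
    proof (cases e)
      case True
      then have "Fm (c1 * cnj P) = Fm (c1 * cnj P')" using ee h2 by simp
      then have "c1 * cnj P = c1 * cnj P'" by (rule Fm_inj)
      then show ?thesis using c0 by simp
    next
      case False
      then have "Rm P = Rm P'" using ee h2 by simp
      then show ?thesis by (rule Rm_inj)
    qed
    have "u powi (m - m') * v powi (n - n') = 1"
      using PP u0 P0 unfolding P_def P'_def by (simp add: power_int_diff field_simps)
    then have "m - m' = 0 \<and> n - n' = 0"
      using key[OF ty] unfolding u_def v_def c1_def c2_def c3_def by blast
    then show "t = t'" using t t' ee by simp
  qed
  have carr: "X \<subseteq> range ?nf"
    proof
      fix x assume "x \<in> X"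
      then have "x \<in> generate O2 gens" by (simp add: X_def)
      then show "x \<in> range ?nf"
      proof (induction rule: generate.induct)
        case one
        then show ?case using rG.nf_gens(4) by (metis S_simps(2,5) rangeI)
      next
        case (incl h)
        then show ?case unfolding gens_def using rG.nf_gens(1-3) by (metis empty_iff insert_iff rangeI)
      next
        case (inv h)
        then have hc: "h \<in> carrier O2" and hh: "h \<circ> h = id" unfolding gens_def using cu
          by (auto simp: O2_def orth_Fm FF_id)
        have "inv\<^bsub>O2\<^esub> h = h" using O.inv_equality[of h h] hc hh by (simp add: S_simps)
        then show ?case using inv(1) unfolding gens_def using rG.nf_gens(1-3) by (metis empty_iff insert_iff rangeI)
      next
        case (eng h1 h2)
        then obtain t t' where "h1 = ?nf t" "h2 = ?nf t'" by auto
        then have "h1 \<otimes>\<^bsub>O2\<^esub> h2 = ?nf (mulT t t')" using rG.nf_mult[of t t'] by (simp add: S_simps)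
        then show ?case by simp
      qed
    qed
  show ?thesis
  proof (intro conjI allI impI)
    show "group (S_tau A1 A2 A3)" unfolding S by (rule G)
    show "rels3 (S_tau A1 A2 A3) (s1 A1 A2 A3) (s2 A1 A2 A3) (s3 A1 A2 A3)" unfolding S sF by (rule R)
  next
    fix h1 h2 h3
    assume hyp: "group H \<and> rels3 H h1 h2 h3"
    interpret rH: rgroup H h1 h2 h3 using hyp by (simp add: rgroup_def rgroup_axioms_def)
    define \<phi> where "\<phi> x = nf H h1 h2 h3 (THE t. ?nf t = x)" for x
    have \<phi>nf: "\<phi> (?nf t) = nf H h1 h2 h3 t" for t
      unfolding \<phi>_def using nf_inj by (metis (mono_tags, lifting) the_equality)
    have hom: "\<phi> \<in> hom ?S H"
    proof (rule homI)
      fix x assume "x \<in> carrier ?S"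
      then obtain t where "x = ?nf t" using carr by (auto simp: S_simps)
      then show "\<phi> x \<in> carrier H" using \<phi>nf rH.nf_carr by simp
    next
      fix x y assume "x \<in> carrier ?S" "y \<in> carrier ?S"
      then obtain t t' where xy: "x = ?nf t" "y = ?nf t'" using carr by (simp add: S_simps) blast
      show "\<phi> (x \<otimes>\<^bsub>?S\<^esub> y) = \<phi> x \<otimes>\<^bsub>H\<^esub> \<phi> y"
        unfolding xy rG.nf_mult \<phi>nf rH.nf_mult ..
    qed
    have gensH: "\<phi> (Fm c1) = h1" "\<phi> (Fm c2) = h2" "\<phi> (Fm c3) = h3"
      using \<phi>nf rG.nf_gens rH.nf_gens by metis+
    show "\<exists>\<phi> \<in> hom (S_tau A1 A2 A3) H.
            \<phi> (s1 A1 A2 A3) = h1 \<and> \<phi> (s2 A1 A2 A3) = h2 \<and> \<phi> (s3 A1 A2 A3) = h3 \<and>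
            (\<forall>\<psi> \<in> hom (S_tau A1 A2 A3) H.
               \<psi> (s1 A1 A2 A3) = h1 \<and> \<psi> (s2 A1 A2 A3) = h2 \<and> \<psi> (s3 A1 A2 A3) = h3
               \<longrightarrow> (\<forall>x \<in> carrier (S_tau A1 A2 A3). \<psi> x = \<phi> x))"
      unfolding S sF
    proof (intro bexI conjI ballI impI)
      show "\<phi> \<in> hom ?S H" by (rule hom)
      show "\<phi> (Fm c1) = h1" "\<phi> (Fm c2) = h2" "\<phi> (Fm c3) = h3" by (fact gensH)+
    next
      fix \<psi> x
      assume \<psi>: "\<psi> \<in> hom ?S H" and hs: "\<psi> (Fm c1) = h1 \<and> \<psi> (Fm c2) = h2 \<and> \<psi> (Fm c3) = h3"
        and x: "x \<in> carrier ?S"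
      obtain t where xt: "x = ?nf t" using x carr by (auto simp: S_simps)
      have "\<psi> (?nf t) = nf H (\<psi> (Fm c1)) (\<psi> (Fm c2)) (\<psi> (Fm c3)) t"
        by (rule nf_hom[OF rG.rgroup_axioms rH.group_axioms \<psi>])
      then show "\<psi> x = \<phi> x" using hs xt \<phi>nf by simp
    qed
  qed
qed

end
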